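(* Let $n > 0$ and $i_n = 2|W_{n-1}| + 1$. Then $$d_0(W,\sigma^{i_n} W) = \frac16 + \frac{1}{2\cdot 3^n} \qquad\text{and}\qquad d(W,\sigma^{i_n}W) = \frac29 + \frac{2}{3^{n+1}}.$$ In particular the bound $\frac29$ in $d(W,\sigma^iW)>\frac29$ (for all $i>0$) cannot be improved.
   Context: Words are finite strings over $\{0,1\}$; $\alpha(i)$ is the $i$-th letter and $|\alpha|$ the length. Define $W_0 = 0$, $W_{m+1} = W_m W_m 1 W_m$, and let $W=W(0)W(1)\cdots$ (indexed from $0$) be the unique infinite word having every $W_m$ as an initial segment. For words $\alpha,\beta$ of equal length, $d(\alpha,\beta) = |\{i:\alpha(i)\ne\beta(i)\}|/|\alpha|$, and (if $\alpha$ contains a $0$) $d_0(\alpha,\beta) = |\{i : \alpha(i)=0,\ \beta(i)=1\}|/|\{i:\alpha(i)=0\}|$. For $i>0$ and $m\ge0$ let $\alpha_m$ be the subword of $W$ of length $|W_m|$ starting at position $i$, and set $d(W,\sigma^iW) = \lim_{m\to\infty} d(W_m,\alpha_m)$ and $d_0(W,\sigma^iW) = \lim_{m\to\infty} d_0(W_m,\alpha_m)$. *)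

theory Defs
  imports Complex_Main
begin

fun Wfin :: "nat \<Rightarrow> nat list" where
  "Wfin 0 = [0]"
| "Wfin (Suc m) = Wfin m @ Wfin m @ [1] @ Wfin m"

definition Winf :: "nat \<Rightarrow> nat" where
  "Winf = (THE w. \<forall>m. \<forall>j < length (Wfin m). w j = Wfin m ! j)"

definition dist_w :: "nat list \<Rightarrow> nat list \<Rightarrow> real" where
  "dist_w a b = real (card {i. i < length a \<and> a ! i \<noteq> b ! i}) / real (length a)"

definition dist0_w :: "nat list \<Rightarrow> nat list \<Rightarrow> real" where
  "dist0_w a b = real (card {i. i < length a \<and> a ! i = 0 \<and> b ! i = 1})
                 / real (card {i. i < length a \<and> a ! i = 0})"

definition alpha_w :: "nat \<Rightarrow> nat \<Rightarrow> nat list" where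
  "alpha_w i m = map (\<lambda>j. Winf (i + j)) [0..<length (Wfin m)]"

end

theory Submission
  imports Defs
begin


abbreviation Ln :: "nat \<Rightarrow> nat" where "Ln m \<equiv> length (Wfin m)"

lemma Ln_pos: "1 \<le> Ln m" by (induction m) auto
lemma Ln_gt: "m < Ln m" by (induction m) auto
lemma Ln_mono: "m \<le> m' \<Longrightarrow> Ln m \<le> Ln m'" by (induction rule: dec_induct) auto
lemma Ln_3pow: "2 * Ln m + 1 = 3 ^ Suc m" by (induction m) auto

lemma Wfin_prefix:
  assumes "m \<le> m'" "j < Ln m" shows "Wfin m' ! j = Wfin m ! j"
  using assms(1)
proof (induction rule: dec_induct)
  case base then show ?case by simp
next
  case (step k)
  have "j < Ln k" using step assms(2) Ln_mono[of m k] by simp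
  then show ?case using step by (simp add: nth_append)
qed

lemma Winf_eq: "j < Ln m \<Longrightarrow> Winf j = Wfin m ! j"
proof -
  have P: "\<forall>m. \<forall>j<Ln m. (\<lambda>j. Wfin j ! j) j = Wfin m ! j"
  proof (intro allI impI)
    fix m j assume "j < Ln m"
    have "Wfin (max m j) ! j = Wfin m ! j" using Wfin_prefix[of m "max m j" j] \<open>j<Ln m\<close> by simp
    moreover have "Wfin (max m j) ! j = Wfin j ! j" using Wfin_prefix[of j "max m j" j] Ln_gt[of j] by simp
    ultimately show "(\<lambda>j. Wfin j ! j) j = Wfin m ! j" by simp
  qed
  have "Winf = (\<lambda>j. Wfin j ! j)" unfolding Winf_def
  proof (rule the_equality)
    show "\<forall>m. \<forall>j<Ln m. (\<lambda>j. Wfin j ! j) j = Wfin m ! j" by (fact P)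
  next
    fix w assume H: "\<forall>m. \<forall>j<Ln m. w j = Wfin m ! j"
    show "w = (\<lambda>j. Wfin j ! j)"
    proof
      fix j show "w j = Wfin j ! j" using H Ln_gt[of j] by blast
    qed
  qed
  then have "Winf j = Wfin j ! j" by (rule fun_cong[where x=j, THEN trans]) simp
  then show "j < Ln m \<Longrightarrow> Winf j = Wfin m ! j" using P by auto
qed

lemma blk1: "j < Ln m \<Longrightarrow> Winf (Ln m + j) = Winf j"
proof -
  assume j: "j < Ln m"
  have "Winf (Ln m + j) = Wfin (Suc m) ! (Ln m + j)" by (rule Winf_eq) (use j in simp)
  also have "\<dots> = Wfin m ! j" using j by (simp add: nth_append)
  also have "\<dots> = Winf j" using j by (simp add: Winf_eq)
  finally show ?thesis .
qed

lemma blk2: "Winf (2 * Ln m) = 1"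
proof -
  have "Winf (2 * Ln m) = Wfin (Suc m) ! (2 * Ln m)" by (rule Winf_eq) simp
  also have "\<dots> = 1" by (simp add: nth_append)
  finally show ?thesis .
qed

lemma blk3: "j < Ln m \<Longrightarrow> Winf (2 * Ln m + 1 + j) = Winf j"
proof -
  assume j: "j < Ln m"
  have 1: "Winf (2 * Ln m + 1 + j) = Wfin (Suc m) ! (2 * Ln m + 1 + j)"
    by (rule Winf_eq) (use j in simp)
  have 2: "Wfin (Suc m) ! (2 * Ln m + 1 + j) = Wfin m ! j" using j by (simp add: nth_append)
  have 3: "Wfin m ! j = Winf j" using j by (simp add: Winf_eq)
  show ?thesis by (simp only: 1 2 3)
qed

lemma blk3': "j < 2 * Ln m \<Longrightarrow> Winf (2 * Ln m + 1 + j) = Winf j"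
proof (cases "j < Ln m")
  case True then show ?thesis by (rule blk3)
next
  case False
  assume j: "j < 2 * Ln m"
  have ii: "2 * Ln m + 1 + j = Ln (Suc m) + (j - Ln m)" using False by simp
  have "Winf (2 * Ln m + 1 + j) = Winf (Ln (Suc m) + (j - Ln m))" by (simp only: ii)
  also have "\<dots> = Winf (j - Ln m)" by (rule blk1) (use j in simp)
  also have "\<dots> = Winf (Ln m + (j - Ln m))" by (rule blk1[symmetric]) (use j in simp)
  also have "\<dots> = Winf j" using False by simp
  finally show ?thesis .
qed

lemma blk3s: "j < Ln m \<Longrightarrow> Winf (Suc (2 * Ln m + j)) = Winf j"
  using blk3 by simp
lemma blk3s': "j < 2 * Ln m \<Longrightarrow> Winf (Suc (2 * Ln m + j)) = Winf j"
  using blk3' by simp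

lemma Wfin_ne: "Wfin m \<noteq> []" using Ln_pos[of m] by auto

lemma set_Wfin: "set (Wfin m) \<subseteq> {0,1}" by (induction m) auto

lemma w_le1: "Winf j \<le> 1"
proof -
  have "Winf j = Wfin j ! j" using Ln_gt[of j] by (simp add: Winf_eq)
  also have "\<dots> \<in> {0,1}" using set_Wfin[of j] nth_mem[OF Ln_gt[of j]] by blast
  finally show ?thesis by auto
qed

lemma w0: "Winf 0 = 0" using Winf_eq[of 0 0] by simp

lemma wlast: "Winf (Ln m - 1) = 0"
proof (induction m)
  case 0 then show ?case using w0 by simp
next
  case (Suc m)
  have "Ln (Suc m) - 1 = 2 * Ln m + 1 + (Ln m - 1)" using Ln_pos[of m] by simp
  then show ?case using blk3[of "Ln m - 1" m] Ln_pos[of m] Suc by simp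
qed

lemma iso_lvl: "Suc j < Ln m \<Longrightarrow> \<not> (Winf j = 1 \<and> Winf (Suc j) = 1)"
proof (induction m arbitrary: j)
  case 0 then show ?case by simp
next
  case (Suc m)
  define L where "L = Ln m"
  have LS: "Ln (Suc m) = 3 * L + 1" by (simp add: L_def)
  consider "Suc j < L" | "Suc j = L" | "L \<le> j \<and> Suc j < 2 * L" | "Suc j = 2 * L" | "j = 2 * L"
    | "2 * L + 1 \<le> j" by linarith
  then show ?case
  proof cases
    case 1 then show ?thesis using Suc.IH L_def by simp
  next
    case 2 then show ?thesis using wlast[of m] L_def by (metis diff_Suc_1 zero_neq_one)
  next
    case 3
    have jj: "L + (j - L) = j" using 3 by simp
    have a: "Winf j = Winf (j - L)" using blk1[of "j - L" m] 3 L_def jj by simp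
    have jj2: "L + Suc (j - L) = Suc j" using 3 by simp
    have b: "Winf (Suc j) = Winf (Suc (j - L))" using blk1[of "Suc (j - L)" m] 3 L_def jj2
      by simp
    have lt: "Suc (j - L) < Ln m" using 3 unfolding L_def by arith
    show ?thesis using a b Suc.IH[OF lt] by simp
  next
    case 4
    have "j = L + (L - 1)" using 4 by simp
    then have "Winf j = Winf (L + (L - 1))" by simp
    also have "\<dots> = Winf (L - 1)" using blk1[of "L - 1" m] L_def Ln_pos[of m] by simp
    finally show ?thesis using wlast[of m] L_def by simp
  next
    case 5
    have ne: "Wfin m \<noteq> []" using Ln_pos[of m] by auto
    have "Winf (Suc j) = Winf (2 * L + 1 + 0)" using 5 by simp
    also have "\<dots> = 0" using blk3[of 0 m] L_def ne w0 by simp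
    finally show ?thesis by simp
  next
    case 6
    define k where "k = j - (2 * L + 1)"
    have jk: "j = 2 * L + 1 + k" using 6 k_def by simp
    have kL: "Suc k < L" using Suc.prems LS jk by simp
    have a: "Winf j = Winf k" using blk3[of k m] jk kL L_def by simp
    have b: "Winf (Suc j) = Winf (Suc k)" using blk3[of "Suc k" m] jk kL L_def by simp
    show ?thesis using a b Suc.IH[of k] kL L_def by simp
  qed
qed

lemma iso: "Winf j = 1 \<Longrightarrow> Winf (Suc j) \<noteq> 1"
  using iso_lvl[of j "Suc (Suc j)"] Ln_gt[of "Suc (Suc j)"] by simp

lemma suffix:
  assumes "n \<le> m" "j < Ln n" shows "Winf (Ln m - Ln n + j) = Winf j"
  using assms(1)
proof (induction rule: dec_induct)
  case base then show ?case by simp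
next
  case (step k)
  have le: "Ln n \<le> Ln k" using Ln_mono step by simp
  have "Ln (Suc k) - Ln n + j = 2 * Ln k + 1 + (Ln k - Ln n + j)" using le by simp
  moreover have "Ln k - Ln n + j < Ln k" using le assms(2) by linarith
  ultimately show ?case using blk3[of "Ln k - Ln n + j" k] step.IH by simp
qed



definition S :: "(nat \<Rightarrow> nat \<Rightarrow> nat) \<Rightarrow> nat \<Rightarrow> nat \<Rightarrow> nat \<Rightarrow> nat" where
  "S f a b len = (\<Sum>k<len. f (Winf (a+k)) (Winf (b+k)))"

lemma S_add: "S f a b (x + y) = S f a b x + S f (a+x) (b+x) y"
  unfolding S_def by (induction y) (simp_all add: add.assoc)

lemma S_cong: "(\<And>k. k < len \<Longrightarrow> Winf (a+k) = Winf (a'+k)) \<Longrightarrow>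
   (\<And>k. k < len \<Longrightarrow> Winf (b+k) = Winf (b'+k)) \<Longrightarrow> S f a b len = S f a' b' len"
  unfolding S_def by (rule sum.cong) auto

lemma S_zero: "(\<And>k. k < len \<Longrightarrow> f (Winf (a+k)) (Winf (b+k)) = 0) \<Longrightarrow> S f a b len = 0"
  unfolding S_def by (rule sum.neutral) auto

lemma S_one: "S f a b 1 = f (Winf a) (Winf b)" by (simp add: S_def)
lemma S_one': "S f a b (Suc 0) = f (Winf a) (Winf b)" by (simp add: S_def)

definition both :: "nat \<Rightarrow> nat \<Rightarrow> nat" where "both x y = (if x = 1 \<and> y = 1 then 1 else 0)"
definition one2 :: "nat \<Rightarrow> nat \<Rightarrow> nat" where "one2 x y = (if y = 1 then 1 else 0)"

lemma O_rec: "2 * S one2 0 0 (Ln m) + 1 = 3 ^ m"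
proof (induction m)
  case 0 then show ?case by (simp add: S_def one2_def w0)
next
  case (Suc m)
  define L where "L = Ln m"
  have e: "Ln (Suc m) = L + L + 1 + L" by (simp add: L_def)
  have "S one2 0 0 (Ln (Suc m)) = S one2 0 0 L + S one2 L L L + S one2 (L+L) (L+L) 1 + S one2 (L+L+1) (L+L+1) L"
    unfolding e S_add by simp
  also have "S one2 L L L = S one2 0 0 L" by (rule S_cong) (simp_all add: L_def blk1)
  also have "S one2 (L+L) (L+L) 1 = 1" using blk2[of m] by (simp add: S_one S_one' one2_def L_def mult_2)
  also have "S one2 (L+L+1) (L+L+1) L = S one2 0 0 L"
    by (rule S_cong) (simp_all add: L_def blk3s flip: mult_2)
  finally show ?case using Suc.IH L_def by simp
qed



lemma S_both_diag: "S both a a len = S one2 a a len"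
  unfolding S_def both_def one2_def by simp

lemma Ob_rec: "2 * S both 0 0 (Ln p) + 1 = 3 ^ p"
  using O_rec by (simp add: S_both_diag)

lemma K1: "S both 0 (Ln p + 1) (Ln p) = 0"
proof (rule S_zero)
  fix k assume k: "k < Ln p"
  show "both (Winf (0 + k)) (Winf (Ln p + 1 + k)) = 0"
  proof (cases "Suc k < Ln p")
    case True
    have "Winf (Ln p + 1 + k) = Winf (Ln p + Suc k)" by simp
    also have "\<dots> = Winf (Suc k)" using True blk1 by blast
    finally show ?thesis using iso[of k] by (simp add: both_def)
  next
    case False
    then have "k = Ln p - 1" using k by simp
    then show ?thesis using wlast[of p] by (simp add: both_def)
  qed
qed

lemma K2: "S both (Ln p + 1) 0 (Ln p - 1) = 0"
proof (rule S_zero)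
  fix k assume k: "k < Ln p - 1"
  have "Winf (Ln p + 1 + k) = Winf (Ln p + Suc k)" by simp
  also have "\<dots> = Winf (Suc k)" by (rule blk1) (use k in arith)
  finally show "both (Winf (Ln p + 1 + k)) (Winf (0 + k)) = 0" using iso[of k] by (auto simp: both_def)
qed

lemma X1: "S both (Ln p) 0 (2 * Ln p + 1) = S both 0 0 (Ln p)"
proof -
  define L where "L = Ln p"
  have e: "2 * L + 1 = L + 1 + L" by simp
  have "S both L 0 (2 * L + 1) = S both L 0 L + S both (L + L) L 1 + S both (L + L + 1) (L + 1) L"
    unfolding e S_add by (simp add: add.assoc)
  also have "S both L 0 L = S both 0 0 L" by (rule S_cong) (simp_all add: L_def blk1)
  also have "S both (L + L) L 1 = 0"
  proof -
    have "Winf L = 0" using blk1[of 0 p] w0 Wfin_ne[of p] L_def by simp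
    then show ?thesis by (simp add: S_one' both_def)
  qed
  also have "S both (L + L + 1) (L + 1) L = S both 0 (L + 1) L"
    by (rule S_cong) (simp_all add: L_def blk3s flip: mult_2)
  also have "\<dots> = 0" unfolding L_def by (rule K1)
  finally show ?thesis by (simp add: L_def)
qed

lemma X2: "S both (Ln p + 1) 0 (2 * Ln p) = S both 0 0 (Ln p)"
proof -
  define L where "L = Ln p"
  have L1: "1 \<le> L" using Ln_pos L_def by simp
  have e: "2 * L = (L - 1) + 1 + L" using L1 by simp
  have "S both (L + 1) 0 (2 * L) = S both (L + 1) 0 (L - 1) + S both (L + 1 + (L - 1)) (L - 1) 1
      + S both (L + 1 + (L - 1) + 1) (L - 1 + 1) L"
    unfolding e S_add by (simp add: add.assoc)
  also have "S both (L + 1) 0 (L - 1) = 0" unfolding L_def by (rule K2)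
  also have "S both (L + 1 + (L - 1)) (L - 1) 1 = 0"
  proof -
    have idx: "L + 1 + (L - 1) = 2 * L" using L1 by simp
    have "S both (L + 1 + (L - 1)) (L - 1) 1 = both (Winf (2 * L)) (Winf (L - 1))"
      by (simp only: S_one idx)
    then show ?thesis using wlast[of p] L_def by (simp add: both_def)
  qed
  also have "S both (L + 1 + (L - 1) + 1) (L - 1 + 1) L = S both 0 0 L"
  proof (rule S_cong)
    fix k assume k: "k < L"
    have "L + 1 + (L - 1) + 1 + k = 2 * L + 1 + k" using L1 by simp
    then show "Winf (L + 1 + (L - 1) + 1 + k) = Winf (0 + k)" using blk3[of k p] k L_def by simp
  next
    fix k assume k: "k < L"
    have "L - 1 + 1 + k = L + k" using L1 by simp
    then show "Winf (L - 1 + 1 + k) = Winf (0 + k)" using blk1[of k p] k L_def by simp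
  qed
  finally show ?thesis by (simp add: L_def)
qed



lemma Cbase: "S both 0 (2 * Ln p + 1) (Ln (Suc p)) = 2 * S both 0 0 (Ln p)"
proof -
  define L where "L = Ln p"
  define i where "i = 2 * L + 1"
  define N where "N = Ln (Suc p)"
  have N: "N = 3 * L + 1" by (simp add: N_def L_def)
  have e: "Ln (Suc p) = L + L + 1 + L" by (simp add: L_def)
  have "S both 0 i (Ln (Suc p)) = S both 0 i L + S both L (i + L) L + S both (L + L) (i + L + L) 1
       + S both (L + L + 1) (i + L + L + 1) L"
    unfolding e S_add by (simp add: add.assoc)
  also have "S both 0 i L = S both 0 0 L"
  proof (rule S_cong)
    fix k assume k: "k < L"
    show "Winf (i + k) = Winf (0 + k)" unfolding i_def using blk3[of k p] k L_def by simp
  qed simp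
  also have "S both L (i + L) L = S both 0 0 L"
  proof (rule S_cong)
    fix k assume k: "k < L"
    show "Winf (L + k) = Winf (0 + k)" using blk1[of k p] k L_def by simp
  next
    fix k assume k: "k < L"
    have idx: "i + L + k = N + k" using N i_def by simp
    show "Winf (i + L + k) = Winf (0 + k)" unfolding idx N_def using blk1[of k "Suc p"] k L_def by simp
  qed
  also have "S both (L + L) (i + L + L) 1 = 0"
  proof -
    have idx: "i + L + L = N + L" using N i_def by simp
    have "Winf (i + L + L) = Winf L" unfolding idx N_def using blk1[of L "Suc p"] L_def by simp
    also have "\<dots> = 0" using blk1[of 0 p] w0 Wfin_ne[of p] L_def by simp
    finally show ?thesis by (simp add: S_one S_one' both_def)
  qed
  also have "S both (L + L + 1) (i + L + L + 1) L = S both 0 (L + 1) L"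
  proof (rule S_cong)
    fix k assume k: "k < L"
    show "Winf (L + L + 1 + k) = Winf (0 + k)" using blk3[of k p] k L_def by (simp flip: mult_2)
  next
    fix k assume k: "k < L"
    have idx: "i + L + L + 1 + k = N + (L + 1 + k)" using N i_def by simp
    show "Winf (i + L + L + 1 + k) = Winf (L + 1 + k)"
      unfolding idx N_def using blk1[of "L + 1 + k" "Suc p"] k L_def by simp
  qed
  also have "\<dots> = 0" unfolding L_def by (rule K1)
  finally show ?thesis by (simp add: L_def i_def)
qed

lemma Cstep:
  assumes m: "Suc p \<le> m"
  shows "S both 0 (2 * Ln p + 1) (Ln (Suc m)) = 3 * S both 0 (2 * Ln p + 1) (Ln m) + 1"
proof -
  define L where "L = Ln m"
  define Lp where "Lp = Ln p"
  define i where "i = 2 * Lp + 1"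
  define N where "N = Ln (Suc p)"
  have N: "N = i + Lp" by (simp add: N_def Lp_def i_def)
  have NL: "N \<le> L" using Ln_mono[OF m] N_def L_def by simp
  have Lp1: "1 \<le> Lp" using Ln_pos Lp_def by simp
  have iN: "i < N" using N Lp1 by simp
  have suf: "\<And>j. j < N \<Longrightarrow> Winf (L - N + j) = Winf j"
    using suffix[OF m] L_def N_def by simp
  define Y where "Y = S both 0 i (L - i)"
  define Ob where "Ob = S both 0 0 Lp"
  have Cm: "S both 0 i L = Y + Ob"
  proof -
    have e: "L = (L - i) + i" using iN NL by simp
    have "S both 0 i L = S both 0 i (L - i) + S both (L - i) (i + (L - i)) i"
      by (subst e) (simp only: S_add add_0)
    also have "S both (L - i) (i + (L - i)) i = S both Lp 0 i"
    proof (rule S_cong)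
      fix k assume k: "k < i"
      have idx: "L - i + k = L - N + (Lp + k)" using N NL by simp
      show "Winf (L - i + k) = Winf (Lp + k)" unfolding idx using suf k N by simp
    next
      fix k assume k: "k < i"
      have idx: "i + (L - i) = L" using iN NL by simp
      show "Winf (i + (L - i) + k) = Winf (0 + k)" unfolding idx using blk1[of k m] k iN NL L_def by simp
    qed
    also have "\<dots> = Ob" unfolding Ob_def i_def Lp_def by (rule X1)
    finally show ?thesis by (simp add: Y_def)
  qed
  have e: "Ln (Suc m) = L + L + 1 + L" by (simp add: L_def)
  have "S both 0 i (Ln (Suc m)) = S both 0 i L + S both L (i + L) L + S both (L + L) (i + L + L) 1
       + S both (L + L + 1) (i + L + L + 1) L"
    unfolding e S_add by (simp add: add.assoc)
  also have "S both (L + L + 1) (i + L + L + 1) L = S both 0 i L"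
  proof (rule S_cong)
    fix k assume k: "k < L"
    show "Winf (L + L + 1 + k) = Winf (0 + k)" using blk3[of k m] k L_def by (simp flip: mult_2)
  next
    fix k assume k: "k < L"
    have idx: "i + L + L + 1 + k = 2 * L + 1 + (i + k)" by simp
    show "Winf (i + L + L + 1 + k) = Winf (i + k)"
      unfolding idx using blk3'[of "i + k" m] k iN NL L_def by simp
  qed
  also have "S both (L + L) (i + L + L) 1 = 1"
  proof -
    have a: "Winf (L + L) = 1" using blk2[of m] L_def by (simp add: mult_2)
    have idx: "i + L + L = 2 * L + 1 + 2 * Lp" using i_def by simp
    have "Winf (i + L + L) = Winf (2 * Lp)" unfolding idx using blk3'[of "2 * Lp" m] iN NL L_def i_def by simp
    also have "\<dots> = 1" using blk2[of p] Lp_def by simp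
    finally show ?thesis using a by (simp add: S_one S_one' both_def)
  qed
  also have "S both L (i + L) L = Y + Ob"
  proof -
    have e2: "L = (L - i) + (1 + 2 * Lp)" using iN NL i_def by simp
    have "S both L (i + L) L = S both L (i + L) (L - i) + S both (L + (L - i)) (i + L + (L - i)) 1
       + S both (L + (L - i) + 1) (i + L + (L - i) + 1) (2 * Lp)"
      by (subst e2) (simp only: S_add add.assoc)
    also have "S both L (i + L) (L - i) = Y" unfolding Y_def
    proof (rule S_cong)
      fix k assume k: "k < L - i"
      show "Winf (L + k) = Winf (0 + k)" using blk1[of k m] k L_def by simp
    next
      fix k assume k: "k < L - i"
      have idx: "i + L + k = L + (i + k)" by simp
      show "Winf (i + L + k) = Winf (i + k)" unfolding idx using blk1[of "i + k" m] k L_def by simp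
    qed
    also have "S both (L + (L - i)) (i + L + (L - i)) 1 = 0"
    proof -
      have ipos: "0 < i" by (simp add: i_def)
      have "Winf (L + (L - i)) = Winf (L - i)" using blk1[of "L - i" m] L_def iN NL ipos by simp
      also have "\<dots> = Winf (L - N + Lp)" using N NL by (simp add: algebra_simps)
      also have "\<dots> = Winf Lp" using suf[of Lp] N iN ipos by simp
      also have "\<dots> = 0" using blk1[of 0 p] w0 Wfin_ne[of p] Lp_def by simp
      finally show ?thesis by (simp add: S_one S_one' both_def)
    qed
    also have "S both (L + (L - i) + 1) (i + L + (L - i) + 1) (2 * Lp) = S both (Lp + 1) 0 (2 * Lp)"
    proof (rule S_cong)
      fix k assume k: "k < 2 * Lp"
      have idx: "L + (L - i) + 1 + k = L + (L - N + (Lp + 1 + k))" using N NL by simp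
      have lt: "L - N + (Lp + 1 + k) < L" using N NL k i_def by simp
      have "Winf (L + (L - i) + 1 + k) = Winf (L - N + (Lp + 1 + k))"
        unfolding idx using blk1[OF lt[unfolded L_def]] L_def by simp
      also have "\<dots> = Winf (Lp + 1 + k)" using suf[of "Lp + 1 + k"] N k i_def by simp
      finally show "Winf (L + (L - i) + 1 + k) = Winf (Lp + 1 + k)" .
    next
      fix k assume k: "k < 2 * Lp"
      have idx: "i + L + (L - i) + 1 + k = 2 * L + 1 + k" using iN NL by simp
      show "Winf (i + L + (L - i) + 1 + k) = Winf (0 + k)"
        unfolding idx using blk3'[of k m] k iN NL L_def i_def by simp
    qed
    also have "\<dots> = Ob" unfolding Ob_def Lp_def by (rule X2)
    finally show ?thesis by simp
  qed
  finally show ?thesis using Cm by (simp add: i_def Lp_def L_def)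
qed



lemma Cform: "2 * S both 0 (2 * Ln p + 1) (Ln (Suc p + t)) + 3 ^ t + 1 = 2 * 3 ^ (p + t)"
proof (induction t)
  case 0 then show ?case using Cbase[of p] Ob_rec[of p] by simp
next
  case (Suc t)
  have "S both 0 (2 * Ln p + 1) (Ln (Suc p + Suc t)) = 3 * S both 0 (2 * Ln p + 1) (Ln (Suc p + t)) + 1"
    using Cstep[of p "Suc p + t"] by simp
  then show ?case using Suc.IH by simp
qed

lemma S_one2_first: "S one2 a b len = S one2 c b len" by (simp add: S_def one2_def)

lemma window_ones:
  assumes "i \<le> Ln m" shows "S one2 0 i (Ln m) = S one2 0 0 (Ln m)"
proof -
  define L where "L = Ln m"
  have e1: "L = (L - i) + i" using assms L_def by simp
  have e2: "L = i + (L - i)" using assms L_def by simp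
  have "S one2 0 i L = S one2 0 i (L - i) + S one2 (L - i) (i + (L - i)) i"
    by (subst e1) (simp only: S_add add_0)
  also have "S one2 (L - i) (i + (L - i)) i = S one2 0 0 i"
    unfolding S_def one2_def
  proof (rule sum.cong)
    fix k assume k: "k \<in> {..<i}"
    have idx: "i + (L - i) + k = L + k" using assms L_def by simp
    have lt: "k < Ln m" using k assms by simp
    have "Winf (i + (L - i) + k) = Winf (L + k)" using idx by simp
    also have "\<dots> = Winf k" using blk1[OF lt] L_def by simp
    finally show "(if Winf (i + (L - i) + k) = 1 then 1 else 0) = (if Winf (0 + k) = 1 then 1 else 0)"
      by simp
  qed simp
  also have "S one2 0 i (L - i) = S one2 i i (L - i)" by (rule S_one2_first)
  finally have "S one2 0 i L = S one2 0 0 i + S one2 i i (L - i)" by simp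
  also have "\<dots> = S one2 0 0 L" by (subst (2) e2) (simp only: S_add add_0)
  finally show ?thesis by (simp add: L_def)
qed

lemma card_sum: "card {k. k < (L::nat) \<and> P k} = (\<Sum>k<L. if P k then 1 else 0)"
proof -
  have eq: "{k. k < L \<and> P k} = {..<L} \<inter> Collect P" by auto
  show ?thesis unfolding eq by (simp add: sum.If_cases)
qed

lemma alpha_nth: "k < Ln m \<Longrightarrow> alpha_w i m ! k = Winf (i + k)"
  by (simp add: alpha_w_def)

lemma counts:
  fixes p t :: nat
  defines "m \<equiv> Suc p + t"
  defines "i \<equiv> 2 * Ln p + 1"
  shows "2 * card {k. k < Ln m \<and> Wfin m ! k = 0 \<and> alpha_w i m ! k = 1} = 3 ^ (p + t) + 3 ^ t"
    and "card {k. k < Ln m \<and> Wfin m ! k \<noteq> alpha_w i m ! k} = 3 ^ (p + t) + 3 ^ t"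
    and "card {k. k < Ln m \<and> Wfin m ! k = 0} = 3 ^ m"
    and "2 * Ln m + 1 = 3 ^ Suc m"
proof -
  define L where "L = Ln m"
  define C where "C = S both 0 i L"
  define Oc where "Oc = S one2 0 0 L"
  have iL: "i \<le> L"
    using Ln_mono[of "Suc p" m] m_def L_def i_def Ln_pos[of p] by simp
  have W1: "S one2 0 i L = Oc" unfolding Oc_def L_def by (rule window_ones) (use iL L_def in simp)
  have Cf: "2 * C + 3 ^ t + 1 = 2 * 3 ^ (p + t)" using Cform[of p t] C_def L_def m_def i_def by simp
  have Of: "2 * Oc + 1 = 3 ^ m" using O_rec[of m] Oc_def L_def by simp
  have Lf: "2 * L + 1 = 3 ^ Suc m" using Ln_3pow[of m] L_def by simp
  have wk: "\<And>k. k < L \<Longrightarrow> Wfin m ! k = Winf k" using Winf_eq L_def by simp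
  have ak: "\<And>k. k < L \<Longrightarrow> alpha_w i m ! k = Winf (i + k)" using alpha_nth L_def by simp
  have c1: "card {k. k < L \<and> Wfin m ! k = 0 \<and> alpha_w i m ! k = 1}
      = (\<Sum>k<L. if Winf k = 0 \<and> Winf (i + k) = 1 then 1 else 0)"
    unfolding card_sum using wk ak by (intro sum.cong) auto
  have c2: "card {k. k < L \<and> Wfin m ! k \<noteq> alpha_w i m ! k}
      = (\<Sum>k<L. if Winf k \<noteq> Winf (i + k) then 1 else 0)"
    unfolding card_sum using wk ak by (intro sum.cong) auto
  have c3: "card {k. k < L \<and> Wfin m ! k = 0} = (\<Sum>k<L. if Winf k = 0 then 1 else 0)"
    unfolding card_sum using wk by (intro sum.cong) auto
  have pw1: "\<And>x y :: nat. x \<le> 1 \<Longrightarrow> y \<le> 1 \<Longrightarrow>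
      (if x = 0 \<and> y = 1 then 1 else 0) + both x y = one2 x y"
    by (auto simp: both_def one2_def)
  have pw2: "\<And>x y :: nat. x \<le> 1 \<Longrightarrow> y \<le> 1 \<Longrightarrow>
      (if x \<noteq> y then 1 else 0) + 2 * both x y = one2 y x + one2 x y"
    by (auto simp: both_def one2_def)
  have pw3: "\<And>x y :: nat. x \<le> 1 \<Longrightarrow> (if x = 0 then 1 else 0) + one2 y x = 1"
    by (auto simp: both_def one2_def)
  have s1: "(\<Sum>k<L. if Winf k = 0 \<and> Winf (i + k) = 1 then 1 else 0) + C = Oc"
    unfolding C_def W1[symmetric] S_def sum.distrib[symmetric] using pw1 w_le1 by simp
  have s2: "(\<Sum>k<L. if Winf k \<noteq> Winf (i + k) then 1 else 0) + 2 * C = Oc + Oc"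
  proof -
    have "Oc + Oc = S one2 0 0 L + S one2 0 i L" using W1 Oc_def by simp
    also have "S one2 0 0 L = S one2 i 0 L" by (rule S_one2_first)
    finally have "Oc + Oc = S one2 i 0 L + S one2 0 i L" .
    then show ?thesis
      unfolding C_def S_def sum_distrib_left sum.distrib[symmetric] using pw2 w_le1 by simp
  qed
  have s3: "(\<Sum>k<L. if Winf k = 0 then 1 else 0) + Oc = L"
  proof -
    have "(\<Sum>k<L. if Winf k = 0 then 1 else 0) + Oc
        = (\<Sum>k<L. (if Winf k = 0 then 1 else 0) + one2 (Winf k) (Winf k))"
      unfolding Oc_def S_def sum.distrib by simp
    also have "\<dots> = (\<Sum>k<L. (1::nat))" using pw3 w_le1 by (intro sum.cong) auto
    finally show ?thesis by simp
  qed
  have m3: "(3::nat) ^ m = 3 * 3 ^ (p + t)" by (simp add: m_def)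
  have m4: "(3::nat) ^ Suc m = 3 * 3 ^ m" by simp
  have "2 * card {k. k < L \<and> Wfin m ! k = 0 \<and> alpha_w i m ! k = 1} = 3 ^ (p + t) + 3 ^ t"
    using c1 s1 Cf Of m3 by linarith
  then show "2 * card {k. k < Ln m \<and> Wfin m ! k = 0 \<and> alpha_w i m ! k = 1} = 3 ^ (p + t) + 3 ^ t"
    by (simp add: L_def)
  have "card {k. k < L \<and> Wfin m ! k \<noteq> alpha_w i m ! k} = 3 ^ (p + t) + 3 ^ t"
    using c2 s2 Cf Of m3 by linarith
  then show "card {k. k < Ln m \<and> Wfin m ! k \<noteq> alpha_w i m ! k} = 3 ^ (p + t) + 3 ^ t"
    by (simp add: L_def)
  have "card {k. k < L \<and> Wfin m ! k = 0} = 3 ^ m"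
    using c3 s3 Of Lf m4 by linarith
  then show "card {k. k < Ln m \<and> Wfin m ! k = 0} = 3 ^ m" by (simp add: L_def)
  show "2 * Ln m + 1 = 3 ^ Suc m" using Lf L_def by simp
qed



lemma hlp1: "(a::real) \<ge> 1 \<Longrightarrow> x \<ge> (1::real) \<Longrightarrow> 9 * a * x - 1 > 0"
proof -
  assume "a \<ge> 1" "x \<ge> 1"
  then have "a * x \<ge> 1" using mult_mono[of 1 a 1 x] by simp
  then show ?thesis by linarith
qed
lemma hlp2: "(a::real) \<ge> 1 \<Longrightarrow> x \<ge> (1::real) \<Longrightarrow> 9 * a - 1/x > 0"
proof -
  assume "a \<ge> 1" "x \<ge> 1"
  then have "1/x \<le> 1" by simp
  then show ?thesis using \<open>a \<ge> 1\<close> by linarith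
qed
lemma hlp3: "(a::real) \<ge> 1 \<Longrightarrow> x \<ge> (1::real) \<Longrightarrow> 9 * a * x - 1 > 0 \<Longrightarrow> 9 * a - 1/x > 0 \<Longrightarrow>
  (a * x + x) / ((9 * a * x - 1) / 2) = 2 * (a + 1) / (9 * a - 1/x)"
  by (simp add: field_simps)
lemma hlp4: "(c::nat) = 3^(p+t) + 3^t \<Longrightarrow> real c = 3^p * 3^t + 3^t"
  by (simp add: power_add)
lemma hlp5: "2 * (l::nat) + 1 = 3 ^ Suc (Suc p + t) \<Longrightarrow> real l = (9 * 3^p * 3^t - 1) / 2"
proof -
  assume h: "2 * l + 1 = 3 ^ Suc (Suc p + t)"
  have "real (2 * l + 1) = real (3 ^ Suc (Suc p + t))" using h by (simp only:)
  then have "2 * real l + 1 = 9 * 3^p * 3^t" by (simp add: power_add)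
  then show ?thesis by simp
qed

lemma limits:
  fixes p :: nat
  defines "i \<equiv> 2 * Ln p + 1"
  shows "(\<lambda>m. dist0_w (Wfin m) (alpha_w i m)) \<longlonglongrightarrow> 1/6 + 1 / (2 * 3 ^ Suc p)"
    and "(\<lambda>m. dist_w (Wfin m) (alpha_w i m)) \<longlonglongrightarrow> 2/9 + 2 / 3 ^ (Suc p + 1)"
proof -
  define a :: real where "a = 3 ^ p"
  have a1: "a \<ge> 1" by (simp add: a_def)
  have d0: "dist0_w (Wfin (t + Suc p)) (alpha_w i (t + Suc p)) = 1/6 + 1 / (2 * 3 ^ Suc p)" for t
  proof -
    have tM: "t + Suc p = Suc p + t" by simp
    note c1 = counts(1)[of p t, folded i_def]
    note c3 = counts(3)[of p t]
    have r1: "real (card {k. k < Ln (Suc p + t) \<and> Wfin (Suc p + t) ! k = 0 \<and> alpha_w i (Suc p + t) ! k = 1})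
        = (3 ^ (p + t) + 3 ^ t) / 2"
      using arg_cong[OF c1, of real] by simp
    have r3: "real (card {k. k < Ln (Suc p + t) \<and> Wfin (Suc p + t) ! k = 0}) = 3 ^ (Suc p + t)"
      using arg_cong[OF c3, of real] by simp
    have "dist0_w (Wfin (t + Suc p)) (alpha_w i (t + Suc p)) = ((3 ^ (p + t) + 3 ^ t) / 2) / 3 ^ (Suc p + t)"
      unfolding dist0_w_def tM r1 r3 ..
    also have "\<dots> = 1/6 + 1 / (2 * 3 ^ Suc p)"
      by (simp add: power_add field_simps)
    finally show ?thesis .
  qed
  show "(\<lambda>m. dist0_w (Wfin m) (alpha_w i m)) \<longlonglongrightarrow> 1/6 + 1 / (2 * 3 ^ Suc p)"
  proof (rule LIMSEQ_offset[where k="Suc p"])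
    have "(\<lambda>t. dist0_w (Wfin (t + Suc p)) (alpha_w i (t + Suc p))) = (\<lambda>t. 1/6 + 1 / (2 * 3 ^ Suc p))"
      by (rule ext) (rule d0)
    then show "(\<lambda>t. dist0_w (Wfin (t + Suc p)) (alpha_w i (t + Suc p))) \<longlonglongrightarrow> 1/6 + 1 / (2 * 3 ^ Suc p)"
      by (simp only: tendsto_const)
  qed
  have d: "dist_w (Wfin (t + Suc p)) (alpha_w i (t + Suc p)) = 2 * (a + 1) / (9 * a - (1/3) ^ t)" for t
  proof -
    have tM: "t + Suc p = Suc p + t" by simp
    note c2 = counts(2)[of p t, folded i_def]
    note c4 = counts(4)[of p t]
    define x :: real where "x = 3 ^ t"
    have x1: "x \<ge> 1" by (simp add: x_def)
    have r2: "real (card {k. k < Ln (Suc p + t) \<and> Wfin (Suc p + t) ! k \<noteq> alpha_w i (Suc p + t) ! k})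
        = a * x + x"
      unfolding a_def x_def by (rule hlp4[OF c2])
    have r4: "real (Ln (Suc p + t)) = (9 * a * x - 1) / 2"
      unfolding a_def x_def by (rule hlp5[OF c4])
    have "dist_w (Wfin (t + Suc p)) (alpha_w i (t + Suc p)) = (a * x + x) / ((9 * a * x - 1) / 2)"
      unfolding dist_w_def tM r2 r4 ..
    also have "\<dots> = 2 * (a + 1) / (9 * a - (1/3) ^ t)"
    proof -
      have p3: "(1/3 :: real) ^ t = 1 / x" by (simp add: x_def power_one_over)
      show ?thesis unfolding p3 using hlp3[OF a1 x1 hlp1[OF a1 x1] hlp2[OF a1 x1]] .
    qed
    finally show ?thesis .
  qed
  have lim: "(\<lambda>t. 2 * (a + 1) / (9 * a - (1/3 :: real) ^ t)) \<longlonglongrightarrow> 2 * (a + 1) / (9 * a - 0)"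
    using a1 by (intro tendsto_divide tendsto_diff tendsto_const LIMSEQ_realpow_zero) auto
  have eq: "2 * (a + 1) / (9 * a - 0) = 2/9 + 2 / 3 ^ (Suc p + 1)"
    using a_def by (simp add: field_simps)
  show "(\<lambda>m. dist_w (Wfin m) (alpha_w i m)) \<longlonglongrightarrow> 2/9 + 2 / 3 ^ (Suc p + 1)"
  proof (rule LIMSEQ_offset[where k="Suc p"])
    have "(\<lambda>t. dist_w (Wfin (t + Suc p)) (alpha_w i (t + Suc p))) = (\<lambda>t. 2 * (a + 1) / (9 * a - (1/3) ^ t))"
      by (rule ext) (rule d)
    then show "(\<lambda>t. dist_w (Wfin (t + Suc p)) (alpha_w i (t + Suc p))) \<longlonglongrightarrow> 2/9 + 2 / 3 ^ (Suc p + 1)"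
      unfolding eq[symmetric] by (simp only: lim)
  qed
qed


theorem proposition2:
  fixes n :: nat
  assumes "n > 0"
  defines "i\<^sub>n \<equiv> 2 * length (Wfin (n - 1)) + 1"
  shows "((\<lambda>m. dist0_w (Wfin m) (alpha_w i\<^sub>n m)) \<longlonglongrightarrow> 1/6 + 1 / (2 * 3 ^ n))
    \<and> ((\<lambda>m. dist_w (Wfin m) (alpha_w i\<^sub>n m)) \<longlonglongrightarrow> 2/9 + 2 / 3 ^ (n + 1))
    \<and> (\<forall>\<epsilon>>0. \<exists>i>0. convergent (\<lambda>m. dist_w (Wfin m) (alpha_w i m))
             \<and> lim (\<lambda>m. dist_w (Wfin m) (alpha_w i m)) < 2/9 + \<epsilon>)"
proof -
  obtain p where n: "n = Suc p" using \<open>n > 0\<close> by (cases n) auto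
  have ii: "i\<^sub>n = 2 * Ln p + 1" unfolding i\<^sub>n_def n by simp
  have P1: "(\<lambda>m. dist0_w (Wfin m) (alpha_w i\<^sub>n m)) \<longlonglongrightarrow> 1/6 + 1 / (2 * 3 ^ n)"
    unfolding ii n by (rule limits(1))
  have P2: "(\<lambda>m. dist_w (Wfin m) (alpha_w i\<^sub>n m)) \<longlonglongrightarrow> 2/9 + 2 / 3 ^ (n + 1)"
    unfolding ii n by (rule limits(2))
  have P3: "\<forall>\<epsilon>>0. \<exists>i>0. convergent (\<lambda>m. dist_w (Wfin m) (alpha_w i m))
             \<and> lim (\<lambda>m. dist_w (Wfin m) (alpha_w i m)) < 2/9 + \<epsilon>"
  proof (intro allI impI)
    fix \<epsilon> :: real assume e: "\<epsilon> > 0"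
    obtain q where q: "(1/3::real) ^ q < \<epsilon>" using real_arch_pow_inv[of \<epsilon> "1/3"] e by auto
    define i where "i = 2 * Ln q + 1"
    have lq: "(\<lambda>m. dist_w (Wfin m) (alpha_w i m)) \<longlonglongrightarrow> 2/9 + 2 / 3 ^ (Suc q + 1)"
      unfolding i_def by (rule limits(2))
    have small: "2 / 3 ^ (Suc q + 1) < (\<epsilon>::real)"
    proof -
      have "(2::real) / 3 ^ (Suc q + 1) = (2/9) * (1/3) ^ q" by (simp add: power_one_over field_simps)
      also have "\<dots> \<le> (1/3) ^ q" by simp
      finally show ?thesis using q by linarith
    qed
    show "\<exists>i>0. convergent (\<lambda>m. dist_w (Wfin m) (alpha_w i m))
             \<and> lim (\<lambda>m. dist_w (Wfin m) (alpha_w i m)) < 2/9 + \<epsilon>"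
    proof (intro exI conjI)
      show "i > 0" by (simp add: i_def)
      show "convergent (\<lambda>m. dist_w (Wfin m) (alpha_w i m))" using lq by (rule convergentI)
      show "lim (\<lambda>m. dist_w (Wfin m) (alpha_w i m)) < 2/9 + \<epsilon>"
        using limI[OF lq] small by simp
    qed
  qed
  show ?thesis using P1 P2 P3 by blast
qed

end
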